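(* Let $\mathcal{A}$ be a finite poset, $V$ a vector space and $(\pi_a)_{a\in\mathcal{A}}$ a family of projectors of $V$ satisfying the intersection property. Then $s_as_b=\delta_{a,b}s_a$ for all $a,b\in\mathcal{A}$.
   Context: $(s_a)_{a\in\mathcal{A}}$ is the unique family of endomorphisms of $V$ with $\pi_a=\sum_{b\le a}s_b$ for every $a$ (Möbius inversion). Intersection property: for all $a,b\in\mathcal{A}$, $\pi_a\pi_b=\sum_{c\le a,\ c\le b}s_c$. *)

theory Defs
  imports Complex_Main
begin

end

theory Submission
  imports Defs
begin

theorem mainTheorem7:
  fixes scale :: "'k::field \<Rightarrow> 'v::ab_group_add \<Rightarrow> 'v"
    and \<pi> s :: "'a::{finite, order} \<Rightarrow> 'v \<Rightarrow> 'v"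
  assumes vs: "vector_space scale"
    and proj_lin: "\<And>a. Vector_Spaces.linear scale scale (\<pi> a)"
    and proj_idem: "\<And>a. \<pi> a \<circ> \<pi> a = \<pi> a"
    and s_lin: "\<And>a. Vector_Spaces.linear scale scale (s a)"
    and moebius: "\<And>a x. \<pi> a x = (\<Sum>b\<in>{b. b \<le> a}. s b x)"
    and intersection: "\<And>a b x. \<pi> a (\<pi> b x) = (\<Sum>c\<in>{c. c \<le> a \<and> c \<le> b}. s c x)"
  shows "\<And>a b x. s a (s b x) = (if a = b then s a x else 0)"
proof -
  have split: "{c. c \<le> b} = insert b {c. c < b}" for b :: 'a by auto
  have sdef: "s b x = \<pi> b x - (\<Sum>c\<in>{c. c < b}. s c x)" for b x
    using moebius[of b x] by (simp add: split)
  have ind: "(\<And>b. (\<And>c. c < b \<Longrightarrow> P c) \<Longrightarrow> P b) \<Longrightarrow> P b0" for P and b0 :: 'a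
  proof -
    assume step: "\<And>b. (\<And>c. c < b \<Longrightarrow> P c) \<Longrightarrow> P b"
    have "\<forall>b::'a. card {c. c < b} = n \<longrightarrow> P b" for n
    proof (induction n rule: less_induct)
      case (less n)
      show ?case
      proof (intro allI impI)
        fix b :: 'a assume nb: "card {c. c < b} = n"
        show "P b"
        proof (rule step)
          fix c assume cb: "c < b"
          have "{d. d < c} \<subset> {d. d < b}" using cb by (auto intro: less_trans)
          hence "card {d. d < c} < n" using nb psubset_card_mono[of "{d. d < b}" "{d. d < c}"] by simp
          thus "P c" using less by blast
        qed
      qed
    qed
    thus "P b0" by blast
  qed
  have L1: "\<pi> a (s b x) = (if b \<le> a then s b x else 0)" for a b x
  proof (induction b rule: ind)
    case (1 b)
    interpret Vector_Spaces.linear scale scale "\<pi> a" by (rule proj_lin)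
    have "\<pi> a (s b x) = \<pi> a (\<pi> b x) - (\<Sum>c\<in>{c. c < b}. \<pi> a (s c x))"
      by (simp add: sdef[of b x] diff sum)
    also have "(\<Sum>c\<in>{c. c < b}. \<pi> a (s c x)) = (\<Sum>c\<in>{c. c < b}. if c \<le> a then s c x else 0)"
      using 1 by simp
    also have "\<dots> = (\<Sum>c\<in>{c. c < b \<and> c \<le> a}. s c x)"
      by (simp add: sum.If_cases Collect_conj_eq Int_commute)
    also have "\<pi> a (\<pi> b x) = (\<Sum>c\<in>{c. c \<le> a \<and> c \<le> b}. s c x)" by (rule intersection)
    finally have eq: "\<pi> a (s b x) = (\<Sum>c\<in>{c. c \<le> a \<and> c \<le> b}. s c x) - (\<Sum>c\<in>{c. c < b \<and> c \<le> a}. s c x)" .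
    show ?case
    proof (cases "b \<le> a")
      case True
      have "{c. c \<le> a \<and> c \<le> b} = insert b {c. c < b \<and> c \<le> a}" using True by auto
      thus ?thesis using eq True by simp
    next
      case False
      have "{c. c \<le> a \<and> c \<le> b} = {c. c < b \<and> c \<le> a}" using False by (auto simp: order.order_iff_strict)
      thus ?thesis using eq False by simp
    qed
  qed
  fix a b x
  show "s a (s b x) = (if a = b then s a x else 0)"
  proof (induction a rule: ind)
    case (1 a)
    have "s a (s b x) = \<pi> a (s b x) - (\<Sum>c\<in>{c. c < a}. s c (s b x))"
      by (rule sdef)
    also have "(\<Sum>c\<in>{c. c < a}. s c (s b x)) = (\<Sum>c\<in>{c. c < a}. if c = b then s c x else 0)"
      using 1 by simp
    also have "\<dots> = (if b < a then s b x else 0)"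
      by (simp add: sum.delta[where S="{c. c < a}" and a=b, simplified] )
    finally show ?case using L1[of a b x] by (auto simp: order.order_iff_strict)
  qed
qed

end
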